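(* Let $S=s_1,\ldots,s_n$ be a sequence of positive real numbers, $\gamma>0$, $k$ a positive integer. Let $(L,\alpha,\beta)$ be an optimal solution of $\textsc{Exp}$ for $S,\gamma,k$, with $L=\ell_1,\ldots,\ell_n$, and let $g=(\prod_{i=1}^ns_i)^{1/n}$. Then \[ \sum_{i=1}^n\big(-\log\beta-\ell_i\log\alpha\big)\ge n\log g. \]
   Context: A level sequence is $L=\ell_1,\ldots,\ell_n$ of integers with $0\le\ell_i\le k$; set $\ell_0=0$. The penalty is $\mathrm{pen}(x,y)=\max(y-x,0)\,\gamma\log n$; $p_{\exp}(s;\lambda)=\lambda e^{-\lambda s}$; $\mathrm{score}_{\exp}(L,S;\alpha,\beta,\gamma)=\sum_{i=1}^n\big[-\log p_{\exp}(s_i;\beta\alpha^{\ell_i})+\mathrm{pen}(\ell_{i-1},\ell_i)\big]$. Problem $\textsc{Exp}$: given $S,\gamma,k$, find $L$ and parameters $\alpha>1$, $\beta>0$ minimizing this score. The paper assumes $s_i>0$ for this problem. *)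

theory Defs
  imports Complex_Main
begin

(* Level sequence L : nat => nat, meaningful on indices 1..n; convention l_0 = 0. *)
definition lev :: "(nat \<Rightarrow> nat) \<Rightarrow> nat \<Rightarrow> nat" where
  "lev L j = (if j = 0 then 0 else L j)"

definition pen :: "nat \<Rightarrow> real \<Rightarrow> nat \<Rightarrow> nat \<Rightarrow> real" where
  "pen n \<gamma> x y = max (real y - real x) 0 * \<gamma> * ln (real n)"

definition p_exp :: "real \<Rightarrow> real \<Rightarrow> real" where
  "p_exp s lam = lam * exp (- lam * s)"

definition score_exp ::
  "nat \<Rightarrow> (nat \<Rightarrow> real) \<Rightarrow> (nat \<Rightarrow> nat) \<Rightarrow> real \<Rightarrow> real \<Rightarrow> real \<Rightarrow> real" where
  "score_exp n S L \<alpha> \<beta> \<gamma> =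
     (\<Sum>i=1..n. - ln (p_exp (S i) (\<beta> * \<alpha> ^ lev L i)) + pen n \<gamma> (lev L (i - 1)) (lev L i))"

definition valid_levels :: "nat \<Rightarrow> nat \<Rightarrow> (nat \<Rightarrow> nat) \<Rightarrow> bool" where
  "valid_levels n k L = (\<forall>i\<in>{1..n}. L i \<le> k)"

definition optimal_exp ::
  "nat \<Rightarrow> (nat \<Rightarrow> real) \<Rightarrow> real \<Rightarrow> nat \<Rightarrow> (nat \<Rightarrow> nat) \<Rightarrow> real \<Rightarrow> real \<Rightarrow> bool" where
  "optimal_exp n S \<gamma> k L \<alpha> \<beta> =
     (valid_levels n k L \<and> \<alpha> > 1 \<and> \<beta> > 0 \<and>
      (\<forall>L' \<alpha>' \<beta>'. valid_levels n k L' \<longrightarrow> \<alpha>' > 1 \<longrightarrow> \<beta>' > 0 \<longrightarrow>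
          score_exp n S L \<alpha> \<beta> \<gamma> \<le> score_exp n S L' \<alpha>' \<beta>' \<gamma>))"

end

theory Submission
  imports Defs
begin

lemma score_form:
  assumes "b > 0" "a > 0"
  shows "score_exp n S L a b g =
    (\<Sum>i=1..n. - ln b - real (L i) * ln a) + b * (\<Sum>i=1..n. a ^ L i * S i)
    + (\<Sum>i=1..n. pen n g (lev L (i - 1)) (lev L i))"
proof -
  have "\<And>i. i \<in> {1..n} \<Longrightarrow> - ln (p_exp (S i) (b * a ^ lev L i)) =
      (- ln b - real (L i) * ln a) + b * (a ^ L i * S i)"
    using assms by (simp add: p_exp_def lev_def ln_mult ln_realpow)
  then have "score_exp n S L a b g = (\<Sum>i=1..n. ((- ln b - real (L i) * ln a) + b * (a ^ L i * S i))
     + pen n g (lev L (i - 1)) (lev L i))"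
    unfolding score_exp_def by (intro sum.cong) auto
  also have "\<dots> = (\<Sum>i=1..n. - ln b - real (L i) * ln a) + b * (\<Sum>i=1..n. a ^ L i * S i)
    + (\<Sum>i=1..n. pen n g (lev L (i - 1)) (lev L i))"
    by (simp add: sum.distrib sum_distrib_left)
  finally show ?thesis .
qed

theorem lemma9:
  fixes n k :: nat and S :: "nat \<Rightarrow> real" and \<gamma> \<alpha> \<beta> :: real and L :: "nat \<Rightarrow> nat"
  assumes "n \<ge> 1" and "\<forall>i\<in>{1..n}. S i > 0" and "\<gamma> > 0" and "k \<ge> 1"
    and "optimal_exp n S \<gamma> k L \<alpha> \<beta>"
  shows "(\<Sum>i=1..n. - ln \<beta> - real (L i) * ln \<alpha>)
           \<ge> real n * ln ((\<Prod>i=1..n. S i) powr (1 / real n))"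
proof -
  have v: "valid_levels n k L" and a1: "\<alpha> > 1" and b0: "\<beta> > 0"
    and opt: "\<And>b. b > 0 \<Longrightarrow> score_exp n S L \<alpha> \<beta> \<gamma> \<le> score_exp n S L \<alpha> b \<gamma>"
    using assms(5) unfolding optimal_exp_def by auto
  define U where "U = (\<Sum>i=1..n. \<alpha> ^ L i * S i)"
  define T where "T = \<beta> * U"
  define A where "A = (\<Sum>i=1..n. - real (L i) * ln \<alpha>)"
  define P where "P = (\<Sum>i=1..n. pen n \<gamma> (lev L (i - 1)) (lev L i))"
  have sc: "\<And>b. b > 0 \<Longrightarrow> score_exp n S L \<alpha> b \<gamma> = - real n * ln b + A + b * U + P"
    using a1 by (simp add: score_form U_def A_def P_def sum_subtractf sum_negf)
  have Upos: "U > 0" unfolding U_def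
    using assms(1,2) a1 by (intro sum_pos) auto
  have Tpos: "T > 0" using Upos b0 by (simp add: T_def)
  have nT: "T \<le> real n"
  proof (rule ccontr)
    assume "\<not> T \<le> real n"
    hence Tn: "T > real n" by simp
    define b where "b = \<beta> * real n / T"
    have bp: "b > 0" using b0 assms(1) Tpos by (simp add: b_def)
    have "score_exp n S L \<alpha> \<beta> \<gamma> \<le> score_exp n S L \<alpha> b \<gamma>" using opt bp by blast
    hence "- real n * ln \<beta> + \<beta> * U \<le> - real n * ln b + b * U"
      using sc bp b0 by simp
    moreover have "ln b = ln \<beta> + ln (real n / T)"
      using b0 assms(1) Tpos proof -
      have "b = \<beta> * (real n / T)" by (simp add: b_def)
      moreover have "real n / T > 0" using assms(1) Tpos by simp
      ultimately show ?thesis using b0 ln_mult[of \<beta> "real n / T"] Tpos assms(1) by simp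
    qed
    moreover have "b * U = real n" using Tpos b0 Upos by (simp add: b_def T_def)
    ultimately have "T \<le> real n - real n * ln (real n / T)" by (simp add: T_def algebra_simps)
    moreover have "ln (T / real n) < T / real n - 1"
      proof -
      have p: "T / real n > 0" using Tpos assms(1) by simp
      have ne: "T / real n \<noteq> 1" using Tn by auto
      show ?thesis using ln_le_minus_one[OF p] ln_eq_minus_one[OF p] ne by linarith
    qed
    moreover have "ln (real n / T) = - ln (T / real n)"
      using Tpos assms(1) by (simp add: ln_div)
    ultimately have c: "T \<le> real n + real n * ln (T / real n)" and d: "ln (T / real n) < T / real n - 1"
      by simp_all
    have "real n * ln (T / real n) < real n * (T / real n - 1)"
      using d assms(1) by (intro mult_strict_left_mono) auto
    also have "\<dots> = T - real n" using assms(1) by (simp add: field_simps)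
    finally show False using c by linarith
  qed
  have Spos: "\<And>i. i \<in> {1..n} \<Longrightarrow> S i > 0" using assms(2) by auto
  have lamS: "\<And>i. i \<in> {1..n} \<Longrightarrow> ln (\<beta> * \<alpha> ^ L i * S i) = ln \<beta> + real (L i) * ln \<alpha> + ln (S i)"
  proof -
    fix i assume i: "i \<in> {1..n}"
    have "S i > 0" using Spos[OF i] .
    then show "ln (\<beta> * \<alpha> ^ L i * S i) = ln \<beta> + real (L i) * ln \<alpha> + ln (S i)"
      using b0 a1 by (simp add: ln_mult ln_realpow)
  qed
  have le: "\<And>i. i \<in> {1..n} \<Longrightarrow> ln (\<beta> * \<alpha> ^ L i * S i) \<le> \<beta> * \<alpha> ^ L i * S i - 1"
    using b0 a1 Spos by (intro ln_le_minus_one) auto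
  have "(\<Sum>i=1..n. ln \<beta> + real (L i) * ln \<alpha> + ln (S i)) \<le> (\<Sum>i=1..n. \<beta> * \<alpha> ^ L i * S i - 1)"
    using le lamS by (intro sum_mono) auto
  also have "\<dots> = T - real n" by (simp add: sum_subtractf T_def U_def sum_distrib_left mult.assoc)
  finally have key: "(\<Sum>i=1..n. ln \<beta> + real (L i) * ln \<alpha> + ln (S i)) \<le> 0" using nT by simp
  have Ppos: "(\<Prod>i=1..n. S i) > 0" using Spos by (intro prod_pos) auto
  have "real n * ln ((\<Prod>i=1..n. S i) powr (1 / real n)) = ln (\<Prod>i=1..n. S i)"
    using Ppos assms(1) by (simp add: ln_powr)
  also have "\<dots> = (\<Sum>i=1..n. ln (S i))" by (rule ln_prod, simp, metis Spos order_less_irrefl)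
  finally show ?thesis using key by (simp add: sum.distrib sum_subtractf)
qed

end
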